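(* Let $A,B\in\mathbb{R}^{n\times n}$ with $A$ symmetric positive definite, and suppose the block matrix $\begin{pmatrix}A & B\\ B^\intercal & A\end{pmatrix}$ is positive definite. Then $$2\begin{pmatrix}A & B\\ B^\intercal & A\end{pmatrix}^{-1}-\begin{pmatrix}A & 0\\ 0 & A\end{pmatrix}^{-1}$$ is positive definite. *)

theory Defs
  imports "HOL-Analysis.Analysis"
begin

definition pos_def_mat :: "real^'n^'n \<Rightarrow> bool" where
  "pos_def_mat M \<longleftrightarrow> transpose M = M \<and> (\<forall>x. x \<noteq> 0 \<longrightarrow> x \<bullet> (M *v x) > 0)"

definition block_mat :: "real^'n^'n \<Rightarrow> real^'n^'n \<Rightarrow> real^'n^'n \<Rightarrow> real^'n^'n \<Rightarrow> real^('n + 'n)^('n + 'n)" where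
  "block_mat P Q R S = (\<chi> i j. case i of
      Inl a \<Rightarrow> (case j of Inl b \<Rightarrow> P $ a $ b | Inr b \<Rightarrow> Q $ a $ b)
    | Inr a \<Rightarrow> (case j of Inl b \<Rightarrow> R $ a $ b | Inr b \<Rightarrow> S $ a $ b))"

end

theory Submission
  imports Defs
begin

lemma pd_inv:
  fixes M :: "real^'m^'m"
  assumes "pos_def_mat M"
  shows "M ** matrix_inv M = mat 1" "matrix_inv M ** M = mat 1"
    "transpose (matrix_inv M) = matrix_inv M"
proof -
  have "\<forall>x. M *v x = 0 \<longrightarrow> x = 0"
    using assms unfolding pos_def_mat_def by (metis inner_zero_right less_irrefl)
  then have "\<exists>B. B ** M = mat 1" using matrix_left_invertible_ker by blast
  then have "invertible M" using invertible_left_inverse by blast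
  then have *: "M ** matrix_inv M = mat 1 \<and> matrix_inv M ** M = mat 1"
    unfolding invertible_def matrix_inv_def by (rule someI_ex)
  then show 1: "M ** matrix_inv M = mat 1" "matrix_inv M ** M = mat 1" by auto
  have tM: "transpose M = M" using assms unfolding pos_def_mat_def by auto
  have "transpose (matrix_inv M) ** M = mat 1"
    using arg_cong[OF 1(1), of transpose] by (simp add: matrix_transpose_mul tM)
  then have "transpose (matrix_inv M) = transpose (matrix_inv M) ** (M ** matrix_inv M)"
    by (simp add: 1)
  also have "\<dots> = matrix_inv M"
    by (simp add: matrix_mul_assoc \<open>transpose (matrix_inv M) ** M = mat 1\<close>)
  finally show "transpose (matrix_inv M) = matrix_inv M" .
qed

lemma quad_form: "(x::real^'m) \<bullet> (M *v x) = (\<Sum>i\<in>UNIV. \<Sum>j\<in>UNIV. x$i * M$i$j * x$j)"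
  by (simp add: inner_vec_def matrix_vector_mult_def sum_distrib_left mult.assoc)

theorem lemmaA1:
  fixes A B :: "real^'n^'n"
  assumes "pos_def_mat A"
    and "pos_def_mat (block_mat A B (transpose B) A)"
  shows "pos_def_mat (2 *\<^sub>R matrix_inv (block_mat A B (transpose B) A)
                      - matrix_inv (block_mat A 0 0 A))"
proof -
  define M where "M = block_mat A B (transpose B) A"
  define D where "D = block_mat A (0::real^'n^'n) 0 A"
  have MPD: "pos_def_mat M" using assms(2) M_def by simp
  define J :: "real^('n+'n) \<Rightarrow> real^('n+'n)" where
    "J w = (\<chi> i. case i of Inl a \<Rightarrow> w $ i | Inr a \<Rightarrow> - (w $ i))" for w
  have Jnz: "J w \<noteq> 0" if "w \<noteq> 0" for w
  proof
    assume "J w = 0"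
    then have "w $ i = 0" for i
      by (cases i) (auto simp: J_def vec_eq_iff dest!: spec[of _ i])
    then show False using that by (simp add: vec_eq_iff)
  qed
  have pt: "(J w)$i * M$i$j * (J w)$j + w$i * M$i$j * w$j = 2 * (w$i * D$i$j * w$j)" for w i j
    by (cases i; cases j) (simp_all add: J_def M_def D_def block_mat_def)
  have Jid: "J w \<bullet> (M *v J w) + w \<bullet> (M *v w) = 2 * (w \<bullet> (D *v w))" for w
    unfolding quad_form by (simp add: sum.distrib[symmetric] sum_distrib_left pt)
  have DPD: "pos_def_mat D"
  proof -
    have "transpose D = D"
      using assms(1) unfolding pos_def_mat_def D_def block_mat_def transpose_def
      by (auto simp: vec_eq_iff split: sum.splits)
    moreover have "w \<bullet> (D *v w) > 0" if "w \<noteq> 0" for w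
    proof -
      have "J w \<bullet> (M *v J w) > 0" "w \<bullet> (M *v w) > 0"
        using MPD Jnz[OF that] that unfolding pos_def_mat_def by auto
      then show ?thesis using Jid[of w] by linarith
    qed
    ultimately show ?thesis unfolding pos_def_mat_def by auto
  qed
  note Mi = pd_inv[OF MPD] and Di = pd_inv[OF DPD]
  have tM: "transpose M = M" using MPD unfolding pos_def_mat_def by auto
  let ?Mi = "matrix_inv M" and ?Di = "matrix_inv D"
  have sym: "transpose (2 *\<^sub>R ?Mi - ?Di) = 2 *\<^sub>R ?Mi - ?Di"
  proof -
    have "transpose (2 *\<^sub>R ?Mi - ?Di) = 2 *\<^sub>R transpose ?Mi - transpose ?Di"
      by (simp add: transpose_def vec_eq_iff)
    then show ?thesis using Mi(3) Di(3) by simp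
  qed
  have pos: "x \<bullet> ((2 *\<^sub>R ?Mi - ?Di) *v x) > 0" if xnz: "x \<noteq> 0" for x
  proof -
    define w where "w = ?Di *v x"
    have xw: "x = D *v w" unfolding w_def by (simp add: matrix_vector_mul_assoc Di)
    have wnz: "w \<noteq> 0" using xw xnz by auto
    define d where "d = w \<bullet> (D *v w)"
    define m where "m = w \<bullet> (M *v w)"
    have dpos: "d > 0" using DPD wnz unfolding pos_def_mat_def d_def by auto
    have mpos: "m > 0" using MPD wnz unfolding pos_def_mat_def m_def by auto
    have m2: "m < 2 * d"
      using Jid[of w] MPD Jnz[OF wnz] unfolding pos_def_mat_def m_def d_def by fastforce
    have xDi: "x \<bullet> (?Di *v x) = d" unfolding d_def using xw w_def by (simp add: inner_commute)
    define u where "u = ?Mi *v x"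
    have xu: "x = M *v u" unfolding u_def by (simp add: matrix_vector_mul_assoc Mi)
    have var: "x \<bullet> (?Mi *v x) \<ge> 2 * (x \<bullet> v) - v \<bullet> (M *v v)" for v
    proof -
      have "0 \<le> (v - u) \<bullet> (M *v (v - u))"
        using MPD unfolding pos_def_mat_def by (cases "v - u = 0") (auto intro: less_imp_le)
      also have "\<dots> = v \<bullet> (M *v v) - v \<bullet> (M *v u) - u \<bullet> (M *v v) + u \<bullet> (M *v u)"
        by (simp add: matrix_vector_mult_diff_distrib inner_diff_left inner_diff_right)
      also have "u \<bullet> (M *v v) = (M *v u) \<bullet> v"
        by (metis dot_lmul_matrix tM vector_transpose_matrix)
      finally have "0 \<le> v \<bullet> (M *v v) - v \<bullet> x - x \<bullet> v + u \<bullet> x" using xu by simp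
      moreover have "u \<bullet> x = x \<bullet> (?Mi *v x)" by (simp add: u_def inner_commute)
      ultimately show ?thesis by (simp add: inner_commute)
    qed
    define t where "t = d / m"
    have "x \<bullet> (?Mi *v x) \<ge> 2 * (x \<bullet> (t *\<^sub>R w)) - (t *\<^sub>R w) \<bullet> (M *v (t *\<^sub>R w))"
      by (rule var)
    also have "x \<bullet> (t *\<^sub>R w) = t * d" unfolding d_def xw by (simp add: inner_commute)
    also have "(t *\<^sub>R w) \<bullet> (M *v (t *\<^sub>R w)) = t * t * m"
      by (simp add: m_def matrix_vector_mult_scaleR)
    finally have ge: "x \<bullet> (?Mi *v x) \<ge> 2 * (t * d) - t * t * m" .
    have "2 * (t * d) - t * t * m = d * d / m" using mpos by (simp add: t_def field_simps power2_eq_square)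
    moreover have "d * d / m > d / 2" using mpos dpos m2
      by (simp add: field_simps)
    ultimately have "x \<bullet> (?Mi *v x) > d / 2" using ge by linarith
    moreover have "x \<bullet> ((2 *\<^sub>R ?Mi - ?Di) *v x) = 2 * (x \<bullet> (?Mi *v x)) - x \<bullet> (?Di *v x)"
    proof -
      have "(2 *\<^sub>R ?Mi) *v x = 2 *\<^sub>R (?Mi *v x)"
        by (simp add: matrix_vector_mult_def vec_eq_iff sum_distrib_left mult.assoc)
      then show ?thesis by (simp add: matrix_vector_mult_diff_rdistrib inner_diff_right)
    qed
    ultimately show ?thesis using xDi by linarith
  qed
  show ?thesis using sym pos unfolding pos_def_mat_def M_def D_def by auto
qed

end
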